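(* Let $r\ge 2$ and $1\le p\le r-1$ be integers, let $H=(V,\mathcal{E})$ be an $r$-uniform hypergraph, and let $V_1,\dots,V_k$ be (not necessarily disjoint) subsets of $V$ with $\bigcup_{i=1}^k V_i = V$. Let $H_i = H[V_i]$ for $1\le i\le k$. Then \[\overrightarrow{\Gamma}_p(H) \le \sum_{i=1}^k \overrightarrow{\Gamma}_p(H_i).\]
   Context: For $U\subseteq V$, the induced subhypergraph $H[U]$ has vertex set $U$ and edge set consisting of all $E\in\mathcal{E}$ with $E\subseteq U$. An orientation $D$ of an $r$-uniform hypergraph $H=(V,\mathcal{E})$ assigns to each edge exactly one of the $r!$ linear orderings of its elements. A set $S\subseteq V$ is a directed $p$-dominating set of $D$ if for every vertex $u\in V\setminus S$ there is an edge $E$ with $u\in E$ whose first $p$ vertices (in the ordering given by $D$) all lie in $S$; if $H$ has no edges containing $u$, then $u$ must lie in $S$ (e.g. for an edgeless hypergraph $S=V$ is forced). $\overrightarrow{\gamma}_p(D)$ is the minimum cardinality of a directed $p$-dominating set of $D$, and $\overrightarrow{\Gamma}_p(H)$ is the maximum of $\overrightarrow{\gamma}_p(D)$ over all orientations $D$ of $H$. *)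

theory Defs
  imports Main
begin

definition uniform_hypergraph :: "nat \<Rightarrow> 'a set \<Rightarrow> 'a set set \<Rightarrow> bool" where
  "uniform_hypergraph r V E \<longleftrightarrow> finite V \<and> (\<forall>e\<in>E. e \<subseteq> V \<and> card e = r)"

definition induced_edges :: "'a set set \<Rightarrow> 'a set \<Rightarrow> 'a set set" where
  "induced_edges E U = {e \<in> E. e \<subseteq> U}"

text \<open>An orientation assigns to each edge a linear ordering of its elements (a distinct list
  enumerating it); for definiteness it is the empty list outside the edge set.\<close>
definition orientations :: "'a set set \<Rightarrow> ('a set \<Rightarrow> 'a list) set" where
  "orientations E = {D. (\<forall>e\<in>E. distinct (D e) \<and> set (D e) = e) \<and> (\<forall>e. e \<notin> E \<longrightarrow> D e = [])}"

definition dir_p_dominating :: "nat \<Rightarrow> 'a set \<Rightarrow> 'a set set \<Rightarrow> ('a set \<Rightarrow> 'a list) \<Rightarrow> 'a set \<Rightarrow> bool" where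
  "dir_p_dominating p V E D S \<longleftrightarrow> S \<subseteq> V \<and>
     (\<forall>u \<in> V - S. \<exists>e\<in>E. u \<in> e \<and> set (take p (D e)) \<subseteq> S)"

definition dir_gamma :: "nat \<Rightarrow> 'a set \<Rightarrow> 'a set set \<Rightarrow> ('a set \<Rightarrow> 'a list) \<Rightarrow> nat" where
  "dir_gamma p V E D = (LEAST n. \<exists>S. dir_p_dominating p V E D S \<and> card S = n)"

definition dir_Gamma :: "nat \<Rightarrow> 'a set \<Rightarrow> 'a set set \<Rightarrow> nat" where
  "dir_Gamma p V E = Max ((\<lambda>D. dir_gamma p V E D) ` orientations E)"

end

theory Submission
  imports Defs
begin

lemma ex_dom:
  assumes "finite V"
  shows "\<exists>S. dir_p_dominating p V E D S \<and> card S = dir_gamma p V E D"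
    and "dir_gamma p V E D \<le> card V"
proof -
  have d: "dir_p_dominating p V E D V" by (simp add: dir_p_dominating_def)
  have ex: "\<exists>n S. dir_p_dominating p V E D S \<and> card S = n" using d by blast
  show "\<exists>S. dir_p_dominating p V E D S \<and> card S = dir_gamma p V E D"
    unfolding dir_gamma_def using LeastI_ex[OF ex] by blast
  show "dir_gamma p V E D \<le> card V"
    unfolding dir_gamma_def using d by (intro Least_le) blast
qed

lemma gamma_le_Gamma:
  assumes "finite V" "D \<in> orientations E"
  shows "dir_gamma p V E D \<le> dir_Gamma p V E"
proof -
  have "(\<lambda>D. dir_gamma p V E D) ` orientations E \<subseteq> {..card V}"
    using ex_dom(2)[OF assms(1)] by auto
  hence "finite ((\<lambda>D. dir_gamma p V E D) ` orientations E)"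
    using finite_subset by blast
  thus ?thesis unfolding dir_Gamma_def using assms(2) by (intro Max_ge) auto
qed

lemma Gamma_le:
  assumes "finite V" "\<forall>e\<in>E. e \<subseteq> V"
    and "\<And>D. D \<in> orientations E \<Longrightarrow> dir_gamma p V E D \<le> m"
  shows "dir_Gamma p V E \<le> m"
proof -
  define D0 where "D0 = (\<lambda>e. if e \<in> E then (SOME xs. distinct xs \<and> set xs = e) else [])"
  have "D0 \<in> orientations E"
  proof -
    { fix e assume "e \<in> E"
      hence "finite e" using assms(1,2) finite_subset by blast
      hence "\<exists>xs. set xs = e \<and> distinct xs" by (rule finite_distinct_list)
      hence "distinct (SOME xs. distinct xs \<and> set xs = e) \<and> set (SOME xs. distinct xs \<and> set xs = e) = e"
        by (metis (mono_tags, lifting) someI_ex)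
      hence "distinct (D0 e) \<and> set (D0 e) = e"
        unfolding D0_def using \<open>e \<in> E\<close> by simp }
    thus ?thesis unfolding orientations_def D0_def by auto
  qed
  have "(\<lambda>D. dir_gamma p V E D) ` orientations E \<subseteq> {..card V}"
    using ex_dom(2)[OF assms(1)] by auto
  hence fin: "finite ((\<lambda>D. dir_gamma p V E D) ` orientations E)"
    using finite_subset by blast
  show ?thesis unfolding dir_Gamma_def
    using fin \<open>D0 \<in> orientations E\<close> assms(3) by (subst Max_le_iff) auto
qed

theorem mainTheorem3:
  fixes r p k :: nat and V :: "'a set" and E :: "'a set set" and Vs :: "nat \<Rightarrow> 'a set"
  assumes "r \<ge> 2" and "1 \<le> p" and "p \<le> r - 1"
    and "uniform_hypergraph r V E"
    and "\<forall>i\<in>{1..k}. Vs i \<subseteq> V"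
    and "(\<Union>i\<in>{1..k}. Vs i) = V"
  shows "dir_Gamma p V E \<le> (\<Sum>i=1..k. dir_Gamma p (Vs i) (induced_edges E (Vs i)))"
proof (rule Gamma_le)
  show finV: "finite V" using assms(4) by (simp add: uniform_hypergraph_def)
  show "\<forall>e\<in>E. e \<subseteq> V" using assms(4) by (simp add: uniform_hypergraph_def)
  fix D assume D: "D \<in> orientations E"
  define Di where "Di = (\<lambda>i e. if e \<in> induced_edges E (Vs i) then D e else [])"
  have finVi: "finite (Vs i)" if "i \<in> {1..k}" for i
    using that assms(5) finV finite_subset by blast
  have Dio: "Di i \<in> orientations (induced_edges E (Vs i))" for i
    using D unfolding orientations_def Di_def induced_edges_def by auto
  define S where "S = (\<lambda>i. SOME S. dir_p_dominating p (Vs i) (induced_edges E (Vs i)) (Di i) S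
        \<and> card S = dir_gamma p (Vs i) (induced_edges E (Vs i)) (Di i))"
  have Sp: "dir_p_dominating p (Vs i) (induced_edges E (Vs i)) (Di i) (S i)
        \<and> card (S i) = dir_gamma p (Vs i) (induced_edges E (Vs i)) (Di i)"
    if "i \<in> {1..k}" for i
    unfolding S_def by (rule someI_ex, rule ex_dom(1)[OF finVi[OF that]])
  define T where "T = (\<Union>i\<in>{1..k}. S i)"
  have domT: "dir_p_dominating p V E D T"
    unfolding dir_p_dominating_def
  proof (intro conjI ballI)
    show "T \<subseteq> V" unfolding T_def using Sp assms(5) by (fastforce simp: dir_p_dominating_def)
    fix u assume u: "u \<in> V - T"
    then obtain i where i: "i \<in> {1..k}" "u \<in> Vs i" using assms(6) by auto
    have "u \<notin> S i" using u i unfolding T_def by auto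
    then obtain e where e: "e \<in> induced_edges E (Vs i)" "u \<in> e"
        "set (take p (Di i e)) \<subseteq> S i"
      using Sp[OF i(1)] i(2) unfolding dir_p_dominating_def by blast
    have "e \<in> E" using e(1) by (simp add: induced_edges_def)
    moreover have "set (take p (D e)) \<subseteq> T"
      using e(1,3) i(1) unfolding Di_def T_def by auto
    ultimately show "\<exists>e\<in>E. u \<in> e \<and> set (take p (D e)) \<subseteq> T" using e(2) by blast
  qed
  have "dir_gamma p V E D \<le> card T"
    unfolding dir_gamma_def using domT by (intro Least_le) blast
  also have "card T \<le> (\<Sum>i=1..k. card (S i))"
    unfolding T_def by (rule card_UN_le) simp
  also have "\<dots> \<le> (\<Sum>i=1..k. dir_Gamma p (Vs i) (induced_edges E (Vs i)))"
  proof (rule sum_mono)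
    fix i assume i: "i \<in> {1..k}"
    show "card (S i) \<le> dir_Gamma p (Vs i) (induced_edges E (Vs i))"
      using Sp[OF i] gamma_le_Gamma[OF finVi[OF i] Dio] by simp
  qed
  finally show "dir_gamma p V E D \<le> (\<Sum>i=1..k. dir_Gamma p (Vs i) (induced_edges E (Vs i)))" .
qed

end
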